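(* Let $p$ be a prime, $A$ a torsion-free $\mathbb{Z}_{(p)}$-algebra, $\mathfrak a\subseteq A$ a divided-power ideal, $P,Q\in A[X]$ monic, and $N\ge1$. If $p_n(P)\equiv p_n(Q)\pmod{n\mathfrak a}$ for all $1\le n\le N$, then $e_n(P)\equiv e_n(Q)\pmod{\mathfrak a}$ for all $1\le n\le N$.
   Context: An ideal $\mathfrak a$ of a torsion-free $\mathbb{Z}_{(p)}$-algebra $A$ is a divided-power ideal if $a^p\in p\,\mathfrak a$ for all $a\in\mathfrak a$ (equivalently $a^k/k!\in\mathfrak a$ in $A\otimes\mathbb{Q}$ for all $a\in\mathfrak a$, $k\ge1$). For a monic $P=X^d+a_1X^{d-1}+\dots+a_d\in A[X]$: $e_0(P)=1$, $e_n(P)=(-1)^na_n$ for $1\le n\le d$, $e_n(P)=0$ for $n>d$; and $p_n(P)$ for $n\ge1$ is defined by Newton's identities $p_n(P)=\sum_{i=1}^{n-1}(-1)^{i-1}e_i(P)p_{n-i}(P)+(-1)^{n-1}n\,e_n(P)$ (for $A$ a domain, the $n$-th power sum of the roots of $P$ with multiplicity). $n\mathfrak a=\{na:a\in\mathfrak a\}$. *)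

theory Defs
  imports "HOL-Computational_Algebra.Polynomial"
begin

definition is_ideal :: "'a::comm_ring_1 set \<Rightarrow> bool" where
  "is_ideal I \<longleftrightarrow> 0 \<in> I \<and> (\<forall>x\<in>I. \<forall>y\<in>I. x + y \<in> I) \<and> (\<forall>r. \<forall>x\<in>I. r * x \<in> I)"

definition nat_smul_set :: "nat \<Rightarrow> 'a::comm_ring_1 set \<Rightarrow> 'a set" where
  "nat_smul_set n I = {of_nat n * a | a. a \<in> I}"

definition zp_algebra :: "nat \<Rightarrow> 'a::comm_ring_1 itself \<Rightarrow> bool" where
  "zp_algebra p _ \<longleftrightarrow> (\<forall>m::nat. \<not> p dvd m \<longrightarrow> (\<exists>y::'a. of_nat m * y = 1))"

definition torsion_free :: "'a::comm_ring_1 itself \<Rightarrow> bool" where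
  "torsion_free _ \<longleftrightarrow> (\<forall>(m::nat) (x::'a). m \<noteq> 0 \<longrightarrow> of_nat m * x = 0 \<longrightarrow> x = 0)"

definition divided_power_ideal :: "nat \<Rightarrow> 'a::comm_ring_1 set \<Rightarrow> bool" where
  "divided_power_ideal p I \<longleftrightarrow> is_ideal I \<and> (\<forall>a\<in>I. a ^ p \<in> nat_smul_set p I)"

text \<open>e_n(P) for P = X^d + a_1 X^(d-1) + ... + a_d, with a_n = coeff P (d - n).\<close>
definition esym :: "'a::comm_ring_1 poly \<Rightarrow> nat \<Rightarrow> 'a" where
  "esym P n = (if n = 0 then 1 else if n \<le> degree P then (-1) ^ n * coeff P (degree P - n) else 0)"

text \<open>List [p_1(P), ..., p_n(P)] defined by Newton's identities.\<close>
fun psums :: "'a::comm_ring_1 poly \<Rightarrow> nat \<Rightarrow> 'a list" where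
  "psums P 0 = []"
| "psums P (Suc n) = (let ps = psums P n; m = Suc n in
     ps @ [(\<Sum>i=1..<m. (-1) ^ (i - 1) * esym P i * ps ! (m - i - 1))
           + (-1) ^ (m - 1) * of_nat m * esym P m])"

definition psum :: "'a::comm_ring_1 poly \<Rightarrow> nat \<Rightarrow> 'a" where
  "psum P n = psums P n ! (n - 1)"

end

theory Submission
  imports Defs "HOL-Computational_Algebra.Formal_Power_Series"
begin

lemma fact_split:
  fixes p :: nat assumes "prime p"
  shows "\<exists>r. fact n = p ^ (n div p) * fact (n div p) * r \<and> \<not> p dvd r"
proof (induction n)
  case 0 then show ?case by (intro exI[of _ 1]) (use assms in \<open>auto simp: prime_gt_1_nat\<close>)
next
  case (Suc n)
  then obtain r where r: "fact n = p ^ (n div p) * fact (n div p) * r" "\<not> p dvd r" by blast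
  have p2: "p \<ge> 2" using assms prime_ge_2_nat by blast
  show ?case
  proof (cases "p dvd Suc n")
    case True
    then obtain q where q: "Suc n = p * q" by blast
    hence q1: "q \<ge> 1" by (cases q) auto
    have pq: "p*q = p*(q-1) + p" using q1 by (cases q) auto
    have "n = p * (q - 1) + (p - 1)" using q pq p2 by linarith
    hence "n = (p - 1) + (q - 1) * p" by simp
    moreover have "((p - 1) + (q - 1) * p) div p = (q - 1) + (p - 1) div p"
      using div_mult_self1[of p "p-1" "q-1"] p2 by linarith
    moreover have "(p - 1) div p = 0" using p2 by simp
    ultimately have nd: "n div p = q - 1" by simp
    have sd: "Suc n div p = q" using q p2 by simp
    have "fact (Suc n) = (Suc n) * fact n" by simp
    also have "\<dots> = p * q * (p ^ (q - 1) * fact (q - 1) * r)" using q r nd by simp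
    also have "\<dots> = p ^ q * fact q * r" using q1
    proof -
      obtain q' where "q = Suc q'" using q1 by (cases q) auto
      thus ?thesis by (simp add: algebra_simps)
    qed
    finally show ?thesis using sd r by auto
  next
    case False
    have "Suc n div p = n div p" using False
      by (auto simp: div_Suc dvd_eq_mod_eq_0)
    moreover have "\<not> p dvd (Suc n * r)" using False r(2) assms prime_dvd_mult_iff by blast
    moreover have "fact (Suc n) = p ^ (n div p) * fact (n div p) * (Suc n * r)" using r by (simp add: algebra_simps)
    ultimately show ?thesis by metis
  qed
qed

lemma ideal_mult: "is_ideal I \<Longrightarrow> x \<in> I \<Longrightarrow> r * x \<in> I"
  unfolding is_ideal_def by blast
lemma ideal_mult2: "is_ideal I \<Longrightarrow> x \<in> I \<Longrightarrow> x * r \<in> I"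
  unfolding is_ideal_def by (metis mult.commute)
lemma ideal_add: "is_ideal I \<Longrightarrow> x \<in> I \<Longrightarrow> y \<in> I \<Longrightarrow> x + y \<in> I"
  unfolding is_ideal_def by blast
lemma ideal_0: "is_ideal I \<Longrightarrow> 0 \<in> I"
  unfolding is_ideal_def by blast
lemma ideal_neg: "is_ideal I \<Longrightarrow> x \<in> I \<Longrightarrow> - x \<in> I"
  using ideal_mult[of I x "-1"] by simp
lemma ideal_diff: "is_ideal I \<Longrightarrow> x \<in> I \<Longrightarrow> y \<in> I \<Longrightarrow> x - y \<in> I"
  using ideal_add[of I x "-y"] ideal_neg[of I y] by simp
lemma ideal_sum: "is_ideal I \<Longrightarrow> (\<And>i. i \<in> A \<Longrightarrow> f i \<in> I) \<Longrightarrow> sum f A \<in> I"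
  by (induction A rule: infinite_finite_induct) (auto intro: ideal_0 ideal_add)

lemma dp_exists:
  fixes I :: "'a::comm_ring_1 set"
  assumes pr: "prime p" and zp: "zp_algebra p TYPE('a)" and dp: "divided_power_ideal p I"
  shows "k \<ge> 1 \<Longrightarrow> b \<in> I \<Longrightarrow> \<exists>y\<in>I. of_nat (fact k) * y = b ^ k"
proof (induction k arbitrary: b rule: less_induct)
  case (less k)
  have id: "is_ideal I" using dp unfolding divided_power_ideal_def by blast
  have p2: "p \<ge> 2" using pr prime_ge_2_nat by blast
  show ?case
  proof (cases "p dvd k")
    case False
    then obtain u :: 'a where u: "of_nat k * u = 1" using zp unfolding zp_algebra_def by blast
    show ?thesis
    proof (cases "k = 1")
      case True then show ?thesis using less.prems by auto
    next
      case k1: False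
      then obtain y' where y': "y' \<in> I" "of_nat (fact (k - 1)) * y' = b ^ (k - 1)"
        using less.IH[of "k - 1" b] less.prems k1 by fastforce
      have kk: "k = Suc (k - 1)" using less.prems by simp
      have "of_nat (fact k) * (u * b * y') = (of_nat k * u) * b * (of_nat (fact (k - 1)) * y')"
      proof -
        have "(fact k :: nat) = k * fact (k - 1)" using fact_reduce[of k, where ?'a=nat] less.prems by simp
        hence "(of_nat (fact k) :: 'a) = of_nat k * of_nat (fact (k - 1))" by simp
        thus ?thesis by (simp add: algebra_simps)
      qed
      also have "\<dots> = b ^ k" using u y' kk by (metis mult_1 power_Suc)
      finally show ?thesis using ideal_mult[OF id y'(1)] by (metis mult.assoc)
    qed
  next
    case True
    then obtain m where m: "k = p * m" by blast
    have m1: "m \<ge> 1" using m less.prems by (cases m) auto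
    have mk: "m < k" using m m1 p2 by simp
    obtain c where c: "c \<in> I" "b ^ p = of_nat p * c"
      using dp less.prems unfolding divided_power_ideal_def nat_smul_set_def by blast
    obtain z where z: "z \<in> I" "of_nat (fact m) * z = c ^ m" using less.IH[OF mk m1 c(1)] by blast
    obtain r where r: "fact (p * m) = p ^ m * fact m * r" "\<not> p dvd r"
      using fact_split[OF pr, of "p * m"] p2 by auto
    obtain u :: 'a where u: "of_nat r * u = 1" using zp r(2) unfolding zp_algebra_def by blast
    have "of_nat (fact k) * (u * z) = of_nat p ^ m * (of_nat (fact m) * z) * (of_nat r * u)"
      using m r(1) by (simp add: algebra_simps)
    also have "\<dots> = b ^ k" using z u c m by (simp add: power_mult power_mult_distrib)
    finally show ?thesis using ideal_mult[OF id z(1)] by blast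
  qed
qed


lemma psums_length: "length (psums P n) = n"
  by (induction n) (simp_all add: Let_def)

lemma psums_prefix: "m \<le> n \<Longrightarrow> k < m \<Longrightarrow> psums P n ! k = psums P m ! k"
proof (induction n)
  case 0 then show ?case by simp
next
  case (Suc n)
  show ?case
  proof (cases "m = Suc n")
    case True then show ?thesis by simp
  next
    case False
    hence "m \<le> n" using Suc.prems by simp
    hence "k < length (psums P n)" using Suc.prems psums_length[of P n] by simp
    hence "psums P (Suc n) ! k = psums P n ! k" by (simp add: Let_def nth_append)
    thus ?thesis using Suc.IH \<open>m \<le> n\<close> Suc.prems by simp
  qed
qed

lemma psum_rec: "psum P (Suc n) = (\<Sum>i=1..n. (-1) ^ (i - 1) * esym P i * psum P (Suc n - i))
     + (-1) ^ n * of_nat (Suc n) * esym P (Suc n)"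
proof -
  have "psum P (Suc n) = (\<Sum>i=1..<Suc n. (-1) ^ (i - 1) * esym P i * psums P n ! (Suc n - i - 1))
     + (-1) ^ (Suc n - 1) * of_nat (Suc n) * esym P (Suc n)"
    unfolding psum_def by (simp add: Let_def nth_append psums_length)
  also have "(\<Sum>i=1..<Suc n. (-1) ^ (i - 1) * esym P i * psums P n ! (Suc n - i - 1))
      = (\<Sum>i=1..n. (-1) ^ (i - 1) * esym P i * psum P (Suc n - i))"
  proof (rule sum.cong)
    fix i assume i: "i \<in> {1..n}"
    have "psums P n ! (Suc n - i - 1) = psums P (Suc n - i) ! (Suc n - i - 1)"
      using i by (intro psums_prefix) auto
    thus "(-1) ^ (i - 1) * esym P i * psums P n ! (Suc n - i - 1) = (-1) ^ (i - 1) * esym P i * psum P (Suc n - i)"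
      by (simp add: psum_def)
  qed (auto simp: atLeastLessThanSuc_atLeastAtMost)
  finally show ?thesis by simp
qed

lemma sign_lemma: "1 \<le> i \<Longrightarrow> i \<le> m \<Longrightarrow> (-1) ^ m * (-1) ^ (i - 1) = - ((-1) ^ (m - i) :: 'a::comm_ring_1)"
proof -
  assume i: "1 \<le> i" "i \<le> m"
  have "(-1::'a) ^ m = (-1) ^ (m - i) * (-1) ^ i" using i by (simp flip: power_add)
  moreover have "(-1::'a) ^ i = - ((-1) ^ (i - 1))" using i by (cases i) auto
  moreover have "(-1::'a) ^ (i - 1) * (-1) ^ (i - 1) = 1" by (simp flip: power_add)
  ultimately show ?thesis by (simp add: algebra_simps)
qed

definition Dop :: "'a::comm_ring_1 fps \<Rightarrow> 'a fps" where
  "Dop F = Abs_fps (\<lambda>n. of_nat n * fps_nth (F) n)"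

lemma Dop_nth: "fps_nth (Dop F) n = of_nat n * fps_nth (F) n" by (simp add: Dop_def)

lemma Dop_eq: "Dop F = fps_X * fps_deriv F"
  by (rule fps_ext) (auto simp: Dop_def fps_X_mult_nth)

lemma Dop_mult: "Dop (F * G) = Dop F * G + F * Dop G"
  unfolding Dop_eq by (simp add: algebra_simps)

lemma Dop_diff: "Dop (F - G) = Dop F - Dop G"
  by (rule fps_ext) (simp add: Dop_def algebra_simps)

lemma Dop_prod:
  assumes "finite A" "\<And>i. i \<in> A \<Longrightarrow> Dop (X i) = X i * Y i"
  shows "Dop (prod X A) = prod X A * sum Y A"
  using assms
proof (induction A rule: finite_induct)
  case empty show ?case by (simp add: fps_eq_iff Dop_def)
next
  case (insert a A)
  then show ?case by (simp add: Dop_mult algebra_simps)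
qed

definition EF :: "'a::comm_ring_1 poly \<Rightarrow> 'a fps" where "EF P = Abs_fps (esym P)"
definition SF :: "'a::comm_ring_1 poly \<Rightarrow> 'a fps" where
  "SF P = Abs_fps (\<lambda>j. if j = 0 then 0 else (-1) ^ (j - 1) * psum P j)"

lemma newton_fps: "Dop (EF P) = EF P * SF P"
proof (rule fps_ext)
  fix n
  show "fps_nth (Dop (EF P)) n = fps_nth ((EF P * SF P)) n"
  proof (cases n)
    case 0 then show ?thesis by (simp add: Dop_def EF_def SF_def)
  next
    case (Suc m)
    let ?e = "esym P" and ?p = "psum P"
    have "fps_nth ((EF P * SF P)) n = (\<Sum>j=0..Suc m. ?e j * fps_nth (SF P) (Suc m - j))"
      by (simp add: fps_mult_nth Suc EF_def)
    also have "\<dots> = (\<Sum>j=0..m. ?e j * fps_nth (SF P) (Suc m - j))"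
      by (simp add: SF_def)
    also have "\<dots> = ?e 0 * fps_nth (SF P) (Suc m) + (\<Sum>j=1..m. ?e j * fps_nth (SF P) (Suc m - j))"
      by (simp add: sum.atLeast_Suc_atMost)
    also have "(\<Sum>j=1..m. ?e j * fps_nth (SF P) (Suc m - j)) = (\<Sum>j=1..m. (-1) ^ (m - j) * ?e j * ?p (Suc m - j))"
      by (rule sum.cong) (auto simp: SF_def Suc_diff_le)
    also have "?e 0 * fps_nth (SF P) (Suc m) = (-1) ^ m * ?p (Suc m)" by (simp add: SF_def esym_def)
    also have "\<dots> = (\<Sum>i=1..m. (-1) ^ m * (-1) ^ (i - 1) * ?e i * ?p (Suc m - i))
         + ((-1) ^ m * (-1) ^ m) * of_nat (Suc m) * ?e (Suc m)"
      by (simp add: psum_rec sum_distrib_left algebra_simps)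
    also have "((-1) ^ m * (-1) ^ m) = (1::'a)" by (simp flip: power_add)
    also have "(\<Sum>i=1..m. (-1) ^ m * (-1) ^ (i - 1) * ?e i * ?p (Suc m - i))
        = (\<Sum>i=1..m. - ((-1) ^ (m - i) * ?e i * ?p (Suc m - i)))"
    proof (rule sum.cong)
      fix i assume i: "i \<in> {1..m}"
      hence h: "(-1) ^ m * (-1) ^ (i - 1) = - ((-1) ^ (m - i) :: 'a)" by (intro sign_lemma) auto
      show "(-1) ^ m * (-1) ^ (i - 1) * ?e i * ?p (Suc m - i) = - ((-1) ^ (m - i) * ?e i * ?p (Suc m - i))"
        using h by (metis mult.assoc mult_minus_left)
    qed simp
    finally have "fps_nth ((EF P * SF P)) n = of_nat (Suc m) * ?e (Suc m)"
      by (simp add: sum_negf)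
    thus ?thesis by (simp add: Suc Dop_def EF_def)
  qed
qed


definition good :: "'a::comm_ring_1 set \<Rightarrow> 'a fps \<Rightarrow> bool" where
  "good I F \<longleftrightarrow> fps_nth F 0 = 1 \<and> (\<forall>n\<ge>1. fps_nth F n \<in> I)"

lemma good_mult: assumes id: "is_ideal I" and "good I F" "good I G" shows "good I (F * G)"
proof -
  have "fps_nth (F * G) n \<in> I" if n: "n \<ge> 1" for n
  proof -
    have "fps_nth (F * G) n = (\<Sum>i=0..n. fps_nth F i * fps_nth G (n - i))" by (simp add: fps_mult_nth)
    also have "\<dots> \<in> I"
    proof (rule ideal_sum[OF id])
      fix i assume "i \<in> {0..n}"
      show "fps_nth F i * fps_nth G (n - i) \<in> I"
      proof (cases "i = 0")
        case True then show ?thesis using assms n by (auto simp: good_def intro: ideal_mult[OF id])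
      next
        case False then show ?thesis using assms by (auto simp: good_def intro: ideal_mult2[OF id])
      qed
    qed
    finally show ?thesis .
  qed
  thus ?thesis using assms by (simp add: good_def)
qed

lemma good_prod: assumes id: "is_ideal I" and "finite A" "\<And>i. i \<in> A \<Longrightarrow> good I (X i)"
  shows "good I (prod X A)"
  using assms(2,3)
proof (induction A rule: finite_induct)
  case empty then show ?case by (simp add: good_def ideal_0[OF id])
next
  case (insert a A) then show ?case by (simp add: good_mult[OF id])
qed

definition gam :: "'a set \<Rightarrow> nat \<Rightarrow> 'a \<Rightarrow> 'a::comm_ring_1" where
  "gam I k b = (if k = 0 then 1 else (SOME y. y \<in> I \<and> of_nat (fact k) * y = b ^ k))"

lemma gam_props:
  fixes I :: "'a::comm_ring_1 set"
  assumes pr: "prime p" and zp: "zp_algebra p TYPE('a)" and dp: "divided_power_ideal p I"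
    and b: "b \<in> I"
  shows "of_nat (fact k) * gam I k b = b ^ k" "k \<ge> 1 \<Longrightarrow> gam I k b \<in> I"
proof -
  have G: "k \<ge> 1 \<Longrightarrow> gam I k b \<in> I \<and> of_nat (fact k) * gam I k b = b ^ k"
  proof -
    assume k: "k \<ge> 1"
    have "\<exists>y. y \<in> I \<and> of_nat (fact k) * y = b ^ k" using dp_exists[OF pr zp dp k b] by blast
    from someI_ex[OF this] show ?thesis using k by (simp add: gam_def)
  qed
  thus "k \<ge> 1 \<Longrightarrow> gam I k b \<in> I" by blast
  show "of_nat (fact k) * gam I k b = b ^ k"
    using G by (cases "k = 0") (auto simp: gam_def)
qed

lemma gam_rec:
  fixes I :: "'a::comm_ring_1 set"
  assumes pr: "prime p" and zp: "zp_algebra p TYPE('a)" and dp: "divided_power_ideal p I"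
    and tf: "torsion_free TYPE('a)" and b: "b \<in> I" and k: "k \<ge> 1"
  shows "of_nat k * gam I k b = b * gam I (k - 1) b"
proof -
  have fk: "(fact k :: nat) = k * fact (k - 1)" using fact_reduce[of k, where ?'a=nat] k by simp
  have kk: "k = Suc (k - 1)" using k by simp
  have "of_nat (fact (k - 1)) * (of_nat k * gam I k b) = of_nat (fact k) * gam I k b"
    using fk by (simp add: algebra_simps)
  also have "\<dots> = b ^ k" using gam_props[OF pr zp dp b] by blast
  also have "\<dots> = b * b ^ (k - 1)" by (subst kk) simp
  also have "\<dots> = of_nat (fact (k - 1)) * (b * gam I (k - 1) b)"
    using gam_props(1)[OF pr zp dp b, of "k - 1"] by (simp add: algebra_simps)
  finally have "of_nat (fact (k - 1)) * (of_nat k * gam I k b - b * gam I (k - 1) b) = 0"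
    by (simp add: algebra_simps)
  moreover have "fact (k - 1) \<noteq> (0::nat)" by simp
  ultimately have "of_nat k * gam I k b - b * gam I (k - 1) b = 0"
    using tf unfolding torsion_free_def by blast
  thus ?thesis by simp
qed

definition Xser :: "'a set \<Rightarrow> nat \<Rightarrow> 'a \<Rightarrow> 'a::comm_ring_1 fps" where
  "Xser I i b = Abs_fps (\<lambda>m. if i dvd m then gam I (m div i) b else 0)"

lemma Xser_good:
  fixes I :: "'a::comm_ring_1 set"
  assumes pr: "prime p" and zp: "zp_algebra p TYPE('a)" and dp: "divided_power_ideal p I"
    and b: "b \<in> I" and i: "i \<ge> 1"
  shows "good I (Xser I i b)"
proof -
  have id: "is_ideal I" using dp unfolding divided_power_ideal_def by blast
  have "fps_nth (Xser I i b) n \<in> I" if n: "n \<ge> 1" for n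
  proof (cases "i dvd n")
    case True
    then obtain q where q: "n = i * q" by blast
    then have "q \<ge> 1" using n by (cases q) auto
    then have "n div i \<ge> 1" using q i by simp
    then show ?thesis using True gam_props(2)[OF pr zp dp b] by (simp add: Xser_def)
  next
    case False then show ?thesis by (simp add: Xser_def ideal_0[OF id])
  qed
  thus ?thesis by (simp add: good_def Xser_def gam_def)
qed

lemma Xser_Dop:
  fixes I :: "'a::comm_ring_1 set"
  assumes pr: "prime p" and zp: "zp_algebra p TYPE('a)" and dp: "divided_power_ideal p I"
    and tf: "torsion_free TYPE('a)" and b: "b \<in> I" and i: "i \<ge> 1"
  shows "Dop (Xser I i b) = Xser I i b * (fps_const (of_nat i * b) * fps_X ^ i)"
proof (rule fps_ext)
  fix m
  have r: "Xser I i b * (fps_const (of_nat i * b) * fps_X ^ i) = fps_X ^ i * (fps_const (of_nat i * b) * Xser I i b)"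
    by (simp add: algebra_simps)
  show "fps_nth (Dop (Xser I i b)) m = fps_nth (Xser I i b * (fps_const (of_nat i * b) * fps_X ^ i)) m"
  proof (cases "m < i")
    case True
    then have "m = 0 \<or> \<not> i dvd m" using dvd_imp_le by auto
    then show ?thesis using True unfolding r by (auto simp: fps_X_power_mult_nth Dop_def Xser_def)
  next
    case False
    show ?thesis
    proof (cases "i dvd m")
      case dv: True
      then obtain k where mk: "m = i * k" by blast
      have k1: "k \<ge> 1" using mk False i by (cases k) auto
      have "m - i = i * (k - 1)" using mk k1 by (simp add: algebra_simps diff_mult_distrib2)
      hence d2: "i dvd (m - i)" "(m - i) div i = k - 1" using i by auto
      have mdk: "m div i = k" using mk i by simp
      have xm: "fps_nth (Xser I i b) m = gam I k b"
        unfolding Xser_def fps_nth_Abs_fps using dv mdk by simp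
      have "fps_nth (Dop (Xser I i b)) m = of_nat m * gam I k b"
        unfolding Dop_nth xm ..
      also have "\<dots> = of_nat i * (of_nat k * gam I k b)" using mk by simp
      also have "\<dots> = of_nat i * b * gam I (k - 1) b" using gam_rec[OF pr zp dp tf b k1] by simp
      also have "\<dots> = of_nat i * b * fps_nth (Xser I i b) (m - i)"
        unfolding Xser_def fps_nth_Abs_fps using d2 by simp
      also have "\<dots> = fps_nth (Xser I i b * (fps_const (of_nat i * b) * fps_X ^ i)) m"
        unfolding r fps_X_power_mult_nth using False by (simp add: fps_mult_left_const_nth)
      finally show ?thesis .
    next
      case nd: False
      have "\<not> i dvd (m - i)" using nd False
        by (metis dvd_add_triv_right_iff le_add_diff_inverse2 not_less add.commute)
      then show ?thesis using nd False unfolding r by (simp add: fps_X_power_mult_nth Xser_def Dop_def)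
    qed
  qed
qed


lemma unique_rec:
  fixes H T :: "'a::comm_ring_1 fps"
  assumes tf: "torsion_free TYPE('a)" and H0: "fps_nth H 0 = 0" and T0: "fps_nth T 0 = 0"
    and rec: "\<And>n. n \<le> N \<Longrightarrow> of_nat n * fps_nth H n = fps_nth (H * T) n"
  shows "n \<le> N \<Longrightarrow> fps_nth H n = 0"
proof (induction n rule: less_induct)
  case (less n)
  show ?case
  proof (cases "n = 0")
    case True then show ?thesis using H0 by simp
  next
    case False
    have "fps_nth (H * T) n = (\<Sum>i=0..n. fps_nth H i * fps_nth T (n - i))" by (simp add: fps_mult_nth)
    also have "\<dots> = 0"
    proof (rule sum.neutral, rule ballI)
      fix i assume i: "i \<in> {0..n}"
      show "fps_nth H i * fps_nth T (n - i) = 0"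
      proof (cases "i = n")
        case True then show ?thesis using T0 by simp
      next
        case False then have "i < n" using i by simp
        then show ?thesis using less by simp
      qed
    qed
    finally have "of_nat n * fps_nth H n = 0" using rec less.prems by simp
    then show ?thesis using tf False unfolding torsion_free_def by blast
  qed
qed

lemma mult_nth_trunc:
  assumes "\<And>i. i \<le> N \<Longrightarrow> fps_nth S i = fps_nth T i" "n \<le> N"
  shows "fps_nth (F * S) n = fps_nth (F * T) n"
  unfolding fps_mult_nth using assms by (intro sum.cong) auto

theorem proposition2p10:
  fixes p N :: nat and I :: "'a::comm_ring_1 set" and P Q :: "'a poly"
  assumes "prime p"
    and "zp_algebra p TYPE('a)"
    and "torsion_free TYPE('a)"
    and "divided_power_ideal p I"
    and "lead_coeff P = 1" and "lead_coeff Q = 1"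
    and "N \<ge> 1"
    and "\<forall>n. 1 \<le> n \<and> n \<le> N \<longrightarrow> psum P n - psum Q n \<in> nat_smul_set n I"
  shows "\<forall>n. 1 \<le> n \<and> n \<le> N \<longrightarrow> esym P n - esym Q n \<in> I"
proof -
  note pr = assms(1) and zp = assms(2) and tf = assms(3) and dp = assms(4)
  have id: "is_ideal I" using dp unfolding divided_power_ideal_def by blast
  have "\<forall>n. \<exists>x. 1 \<le> n \<and> n \<le> N \<longrightarrow> x \<in> I \<and> psum P n - psum Q n = of_nat n * x"
    using assms(8) unfolding nat_smul_set_def by blast
  then obtain a where a: "\<And>n. 1 \<le> n \<Longrightarrow> n \<le> N \<Longrightarrow> a n \<in> I \<and> psum P n - psum Q n = of_nat n * a n"
    by metis
  define bb where "bb n = (-1) ^ (n - 1) * a n" for n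
  have bbI: "bb n \<in> I" if "1 \<le> n" "n \<le> N" for n
    using a[OF that] ideal_mult[OF id] by (simp add: bb_def)
  define R where "R = fps_right_inverse (EF Q) 1"
  have EQ0: "fps_nth (EF Q) 0 = 1" by (simp add: EF_def esym_def)
  have ER: "EF Q * R = 1" unfolding R_def by (rule fps_right_inverse) (simp add: EQ0)
  define F where "F = EF P * R"
  have EPF: "EF P = EF Q * F" unfolding F_def using ER by (metis mult.assoc mult.commute mult_1)
  define S where "S = SF P - SF Q"
  have DF: "Dop F = F * S"
  proof -
    have "EF Q * F * SF P = EF Q * SF Q * F + EF Q * Dop F"
      using newton_fps[of P] newton_fps[of Q] Dop_mult[of "EF Q" F] EPF by (simp add: algebra_simps)
    hence "EF Q * Dop F = EF Q * (F * S)" unfolding S_def by (simp add: algebra_simps)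
    hence "R * (EF Q * Dop F) = R * (EF Q * (F * S))" by simp
    thus ?thesis using ER by (simp add: mult.assoc[symmetric] mult.commute[of R])
  qed
  define X where "X i = Xser I i (bb i)" for i
  define Y where "Y i = fps_const (of_nat i * bb i) * (fps_X ^ i :: 'a fps)" for i
  define G where "G = prod X {1..N}"
  define T where "T = sum Y {1..N}"
  have DG: "Dop G = G * T" unfolding G_def T_def
    by (rule Dop_prod) (auto simp: X_def Y_def intro!: Xser_Dop[OF pr zp dp tf] bbI)
  have goodG: "good I G" unfolding G_def
    by (rule good_prod[OF id]) (auto simp: X_def intro!: Xser_good[OF pr zp dp] bbI)
  have Tn: "fps_nth T j = (if 1 \<le> j \<and> j \<le> N then of_nat j * bb j else 0)" for j
  proof -
    have "fps_nth T j = (\<Sum>k\<in>{1..N}. if k = j then of_nat k * bb k else 0)"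
      unfolding T_def Y_def fps_sum_nth by (intro sum.cong) (auto simp: fps_mult_left_const_nth)
    thus ?thesis by (simp add: sum.delta)
  qed
  have Sn: "fps_nth S j = fps_nth T j" if "j \<le> N" for j
  proof (cases "j = 0")
    case True then show ?thesis by (simp add: S_def SF_def Tn)
  next
    case False
    then have "fps_nth S j = (-1) ^ (j - 1) * (psum P j - psum Q j)"
      by (simp add: S_def SF_def algebra_simps)
    also have "\<dots> = of_nat j * bb j" using a[of j] False that by (simp add: bb_def algebra_simps)
    finally show ?thesis using False that by (simp add: Tn)
  qed
  have F0: "fps_nth F 0 = 1" unfolding F_def R_def by (simp add: EF_def esym_def)
  define H where "H = F - G"
  have H0: "fps_nth H 0 = 0" using F0 goodG by (simp add: H_def good_def)
  have Hrec: "of_nat n * fps_nth H n = fps_nth (H * T) n" if "n \<le> N" for n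
  proof -
    have "of_nat n * fps_nth H n = fps_nth (Dop H) n" by (simp add: Dop_nth)
    also have "\<dots> = fps_nth (F * S) n - fps_nth (G * T) n" by (simp add: H_def Dop_diff DF DG)
    also have "fps_nth (F * S) n = fps_nth (F * T) n" by (rule mult_nth_trunc[OF Sn that])
    also have "fps_nth (F * T) n - fps_nth (G * T) n = fps_nth (H * T) n" by (simp add: H_def algebra_simps)
    finally show ?thesis .
  qed
  have Hz: "fps_nth H n = 0" if "n \<le> N" for n
    by (rule unique_rec[OF tf H0 _ Hrec that]) (simp add: Tn)
  have F1: "fps_nth (F - 1) k \<in> I" if "k \<le> N" for k
  proof (cases "k = 0")
    case True then show ?thesis using F0 ideal_0[OF id] by simp
  next
    case False
    have "fps_nth F k = fps_nth G k" using Hz[OF that] by (simp add: H_def)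
    then show ?thesis using goodG False by (simp add: good_def)
  qed
  show ?thesis
  proof (intro allI impI)
    fix n assume n: "1 \<le> n \<and> n \<le> N"
    have "esym P n - esym Q n = fps_nth (EF Q * (F - 1)) n"
    proof -
      have "esym P n = fps_nth (EF Q * F) n" unfolding EPF[symmetric] by (simp add: EF_def)
      moreover have "esym Q n = fps_nth (EF Q) n" by (simp add: EF_def)
      moreover have "EF Q * (F - 1) = EF Q * F - EF Q" by (simp add: algebra_simps)
      ultimately show ?thesis by simp
    qed
    also have "\<dots> = (\<Sum>i=0..n. fps_nth (EF Q) i * fps_nth (F - 1) (n - i))" by (simp add: fps_mult_nth)
    also have "\<dots> \<in> I" using n by (intro ideal_sum[OF id] ideal_mult[OF id] F1) auto
    finally show "esym P n - esym Q n \<in> I" .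
  qed
qed

end
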